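(* Let $n\ge1$, $C\in\mathcal C_n$ and $A=\Xi^{-1}(C)$. For $i,j\in[n]$ put $m_{ij}=\min(i,j,n-i+1,n-j+1)$. Then for all $i,j,k\in[n]$, $$1-m_{ij}\le \sum_{x=1}^k A_{i,j,x}\le m_{ij},\qquad 1-m_{ij}\le \sum_{x=1}^k A_{i,x,j}\le m_{ij},\qquad 1-m_{ij}\le \sum_{x=1}^k A_{x,i,j}\le m_{ij}.$$
   Context: Let $[n]=\{1,\dots,n\}$, $[0,n]=\{0,\dots,n\}$. A corner-sum hypermatrix of order $n$ is an integer array $C=(C_{i,j,k})_{i,j,k\in[0,n]}$ such that for all $i,j\in[0,n]$: $C_{i,j,0}=C_{i,0,j}=C_{0,i,j}=0$, $C_{i,j,n}=C_{i,n,j}=C_{n,i,j}=ij$, and for all $k\in[n]$ each of $C_{i,j,k}-C_{i,j,k-1}$, $C_{i,k,j}-C_{i,k-1,j}$, $C_{k,i,j}-C_{k-1,i,j}$ is an integer in $\{\max(0,i+j-n),\dots,\min(i,j)\}$; $\mathcal C_n$ is the set of these. $\Xi^{-1}(C)$ is the array indexed by $[n]^3$ with $\Xi^{-1}(C)_{i,j,k}=C_{i,j,k}-C_{i-1,j,k}-C_{i,j-1,k}-C_{i,j,k-1}+C_{i-1,j-1,k}+C_{i-1,j,k-1}+C_{i,j-1,k-1}-C_{i-1,j-1,k-1}$. *)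

theory Defs
  imports Main
begin

text \<open>Corner-sum hypermatrices of order n, indexed by [0,n]^3 (values outside are irrelevant).\<close>

definition step_ok :: "nat \<Rightarrow> nat \<Rightarrow> nat \<Rightarrow> int \<Rightarrow> bool" where
  "step_ok n i j d \<longleftrightarrow> max 0 (int i + int j - int n) \<le> d \<and> d \<le> int (min i j)"

definition corner_sum :: "nat \<Rightarrow> (nat \<Rightarrow> nat \<Rightarrow> nat \<Rightarrow> int) \<Rightarrow> bool" where
  "corner_sum n C \<longleftrightarrow>
     (\<forall>i\<le>n. \<forall>j\<le>n.
        C i j 0 = 0 \<and> C i 0 j = 0 \<and> C 0 i j = 0 \<and>
        C i j n = int (i * j) \<and> C i n j = int (i * j) \<and> C n i j = int (i * j) \<and>
        (\<forall>k\<in>{1..n}.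
           step_ok n i j (C i j k - C i j (k - 1)) \<and>
           step_ok n i j (C i k j - C i (k - 1) j) \<and>
           step_ok n i j (C k i j - C (k - 1) i j)))"

definition Xi_inv :: "(nat \<Rightarrow> nat \<Rightarrow> nat \<Rightarrow> int) \<Rightarrow> nat \<Rightarrow> nat \<Rightarrow> nat \<Rightarrow> int" where
  "Xi_inv C i j k =
     C i j k - C (i-1) j k - C i (j-1) k - C i j (k-1)
     + C (i-1) (j-1) k + C (i-1) j (k-1) + C i (j-1) (k-1) - C (i-1) (j-1) (k-1)"

definition mval :: "nat \<Rightarrow> nat \<Rightarrow> nat \<Rightarrow> int" where
  "mval n i j = int (min (min i j) (min (n - i + 1) (n - j + 1)))"

end

theory Submission
  imports Defs
begin

lemma tele: "(\<Sum>x=1..(k::nat). (F x - F (x-1)::int)) = F k - F 0"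
  by (induction k) auto

lemma key:
  fixes a b :: int and p k n :: nat
  assumes "1 \<le> p" "p \<le> n" "1 \<le> k" "k \<le> n"
    and "step_ok n p k a" and "step_ok n (p-1) k b"
  shows "1 - int (min p (n-p+1)) \<le> a - b \<and> a - b \<le> int (min p (n-p+1))"
  using assms unfolding step_ok_def by (auto simp: max_def min_def split: if_splits)

lemma key2:
  fixes d :: int and p q n :: nat
  assumes "1 - int (min p (n-p+1)) \<le> d \<and> d \<le> int (min p (n-p+1))"
      and "1 - int (min q (n-q+1)) \<le> d \<and> d \<le> int (min q (n-q+1))"
  shows "1 - mval n p q \<le> d \<and> d \<le> mval n p q"
  using assms unfolding mval_def by (auto simp: min_def split: if_splits)

lemma steps:
  assumes "corner_sum n C" "i \<le> n" "j \<le> n" "k \<in> {1..n}"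
  shows "step_ok n i j (C i j k - C i j (k - 1))"
        "step_ok n i j (C i k j - C i (k - 1) j)"
        "step_ok n i j (C k i j - C (k - 1) i j)"
  using assms unfolding corner_sum_def by blast+

lemma zeros:
  assumes "corner_sum n C" "i \<le> n" "j \<le> n"
  shows "C i j 0 = 0" "C i 0 j = 0" "C 0 i j = 0"
  using assms unfolding corner_sum_def by blast+

theorem mainTheorem17:
  fixes n :: nat and C :: "nat \<Rightarrow> nat \<Rightarrow> nat \<Rightarrow> int"
  assumes "n \<ge> 1" and "corner_sum n C"
  shows "\<forall>i\<in>{1..n}. \<forall>j\<in>{1..n}. \<forall>k\<in>{1..n}.
    1 - mval n i j \<le> (\<Sum>x=1..k. Xi_inv C i j x) \<and> (\<Sum>x=1..k. Xi_inv C i j x) \<le> mval n i j \<and>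
    1 - mval n i j \<le> (\<Sum>x=1..k. Xi_inv C i x j) \<and> (\<Sum>x=1..k. Xi_inv C i x j) \<le> mval n i j \<and>
    1 - mval n i j \<le> (\<Sum>x=1..k. Xi_inv C x i j) \<and> (\<Sum>x=1..k. Xi_inv C x i j) \<le> mval n i j"
proof (intro ballI)
  fix i j k assume i: "i \<in> {1..n}" and j: "j \<in> {1..n}" and k: "k \<in> {1..n}"
  note cs = assms(2)
  have i1: "i - 1 \<le> n" and j1: "j - 1 \<le> n" using i j by auto
  have ii: "i \<le> n" "1 \<le> i" and jj: "j \<le> n" "1 \<le> j" and kk: "k \<le> n" "1 \<le> k" using i j k by auto
  have ij: "i \<in> {1..n}" "j \<in> {1..n}" using i j by auto
  define F where "F x = C i j x - C (i-1) j x - C i (j-1) x + C (i-1) (j-1) x" for x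
  have s1: "(\<Sum>x=1..k. Xi_inv C i j x) = F k - F 0"
    unfolding tele[symmetric] by (rule sum.cong) (auto simp: F_def Xi_inv_def)
  have F0: "F 0 = 0" unfolding F_def using zeros(1)[OF cs] ii jj i1 j1 by simp
  have A1: "1 - int (min j (n-j+1)) \<le> F k \<and> F k \<le> int (min j (n-j+1))"
    using key[OF jj(2) jj(1) kk(2) kk(1) steps(3)[OF cs jj(1) kk(1) ij(1)] steps(3)[OF cs j1 kk(1) ij(1)]]
    unfolding F_def by (simp add: algebra_simps)
  have A2: "1 - int (min i (n-i+1)) \<le> F k \<and> F k \<le> int (min i (n-i+1))"
    using key[OF ii(2) ii(1) kk(2) kk(1) steps(2)[OF cs ii(1) kk(1) ij(2)] steps(2)[OF cs i1 kk(1) ij(2)]]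
    unfolding F_def by (simp add: algebra_simps)
  have R1: "1 - mval n i j \<le> (\<Sum>x=1..k. Xi_inv C i j x) \<and> (\<Sum>x=1..k. Xi_inv C i j x) \<le> mval n i j"
    unfolding s1 F0 using key2[OF A2 A1] by simp
  define G where "G x = C i x j - C (i-1) x j - C i x (j-1) + C (i-1) x (j-1)" for x
  have s2: "(\<Sum>x=1..k. Xi_inv C i x j) = G k - G 0"
    unfolding tele[symmetric] by (rule sum.cong) (auto simp: G_def Xi_inv_def)
  have G0: "G 0 = 0" unfolding G_def using zeros(2)[OF cs] ii jj i1 j1 by simp
  have B1: "1 - int (min j (n-j+1)) \<le> G k \<and> G k \<le> int (min j (n-j+1))"
    using key[OF jj(2) jj(1) kk(2) kk(1), of "C i k j - C (i-1) k j" "C i k (j-1) - C (i-1) k (j-1)"]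
      steps(3)[OF cs kk(1) jj(1) ij(1)] steps(3)[OF cs kk(1) j1 ij(1)]
    unfolding G_def step_ok_def by (auto simp: algebra_simps min.commute)
  have B2: "1 - int (min i (n-i+1)) \<le> G k \<and> G k \<le> int (min i (n-i+1))"
    using key[OF ii(2) ii(1) kk(2) kk(1) steps(1)[OF cs ii(1) kk(1) ij(2)] steps(1)[OF cs i1 kk(1) ij(2)]]
    unfolding G_def by (simp add: algebra_simps)
  have R2: "1 - mval n i j \<le> (\<Sum>x=1..k. Xi_inv C i x j) \<and> (\<Sum>x=1..k. Xi_inv C i x j) \<le> mval n i j"
    unfolding s2 G0 using key2[OF B2 B1] by simp
  define H where "H x = C x i j - C x (i-1) j - C x i (j-1) + C x (i-1) (j-1)" for x
  have s3: "(\<Sum>x=1..k. Xi_inv C x i j) = H k - H 0"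
    unfolding tele[symmetric] by (rule sum.cong) (auto simp: H_def Xi_inv_def)
  have H0: "H 0 = 0" unfolding H_def using zeros(3)[OF cs] ii jj i1 j1 by simp
  have C1: "1 - int (min j (n-j+1)) \<le> H k \<and> H k \<le> int (min j (n-j+1))"
    using key[OF jj(2) jj(1) kk(2) kk(1), of "C k i j - C k (i-1) j" "C k i (j-1) - C k (i-1) (j-1)"]
      steps(2)[OF cs kk(1) jj(1) ij(1)] steps(2)[OF cs kk(1) j1 ij(1)]
    unfolding H_def step_ok_def by (auto simp: algebra_simps min.commute)
  have C2: "1 - int (min i (n-i+1)) \<le> H k \<and> H k \<le> int (min i (n-i+1))"
    using key[OF ii(2) ii(1) kk(2) kk(1), of "C k i j - C k i (j-1)" "C k (i-1) j - C k (i-1) (j-1)"]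
      steps(1)[OF cs kk(1) ii(1) ij(2)] steps(1)[OF cs kk(1) i1 ij(2)]
    unfolding H_def step_ok_def by (auto simp: algebra_simps min.commute)
  have R3: "1 - mval n i j \<le> (\<Sum>x=1..k. Xi_inv C x i j) \<and> (\<Sum>x=1..k. Xi_inv C x i j) \<le> mval n i j"
    unfolding s3 H0 using key2[OF C2 C1] by simp
  show "1 - mval n i j \<le> (\<Sum>x=1..k. Xi_inv C i j x) \<and> (\<Sum>x=1..k. Xi_inv C i j x) \<le> mval n i j \<and>
    1 - mval n i j \<le> (\<Sum>x=1..k. Xi_inv C i x j) \<and> (\<Sum>x=1..k. Xi_inv C i x j) \<le> mval n i j \<and>
    1 - mval n i j \<le> (\<Sum>x=1..k. Xi_inv C x i j) \<and> (\<Sum>x=1..k. Xi_inv C x i j) \<le> mval n i j"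
    using R1 R2 R3 by blast
qed

end
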